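(* In the setting below, $$\sum_{\ell\in P^*}\bigl(|\Psi_+(\ell)|+|\Psi_{k+1}(\ell)|\bigr)=O(mr),$$ where the implied constant depends only on $\rho$, $c$ and $C$.
   Context: Let $P^*$ be a set of $m$ non-vertical lines in the plane, $\rho\ge 2$ and $c,C\ge1$ constants, $1\le r\le m$, and $k$ the integer with $\rho^{k-1}<r\le\rho^k$. Let $\Xi_0,\dots,\Xi_k,\Xi_{k+1}$ be a hierarchy of cuttings: $\Xi_0=\{\mathbb{R}^2\}$; for each $1\le i\le k+1$, $\Xi_i$ is a finite collection of closed triangles ("cells") with pairwise disjoint interiors covering the plane, each cell of $\Xi_i$ is contained in a unique cell of $\Xi_{i-1}$ (its parent; it is a child of the parent), and every cell of $\Xi_{i-1}$ is the union of its children. A line crosses a cell if it meets its interior. Moreover: for $1\le i\le k$, $|\Xi_i|\le C\rho^{2i}$, each cell of $\Xi_{i-1}$ has at most $c$ children in $\Xi_i$, and each cell of $\Xi_i$ is crossed by at most $m/\rho^i$ lines of $P^*$; and $|\Xi_{k+1}|\le Cr^2$. For $\ell\in P^*$: $\Psi(\ell)$ is the set of cells of $\Xi_0,\dots,\Xi_k$ crossed by $\ell$; $\Psi_{k+1}(\ell)$ is the set of cells of $\Xi_{k+1}$ crossed by $\ell$; $\Psi_+(\ell)$ is the set of cells that are children of some cell of $\Psi(\ell)$ and lie completely above $\ell$ (contained in the closed half-plane above $\ell$ and not crossed by $\ell$). *)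

theory Defs
  imports "HOL-Analysis.Analysis"
begin

type_synonym point = "real \<times> real"

text \<open>A non-vertical line is encoded by its slope and intercept: (a,b) is the line y = a x + b.\<close>
type_synonym nvline = "real \<times> real"

definition line_pts :: "nvline \<Rightarrow> point set" where
  "line_pts l = {p. snd p = fst l * fst p + snd l}"

definition closed_upper_halfplane :: "nvline \<Rightarrow> point set" where
  "closed_upper_halfplane l = {p. snd p \<ge> fst l * fst p + snd l}"

definition crosses :: "nvline \<Rightarrow> point set \<Rightarrow> bool" where
  "crosses l D \<longleftrightarrow> line_pts l \<inter> interior D \<noteq> {}"

definition above :: "nvline \<Rightarrow> point set \<Rightarrow> bool" where
  "above l D \<longleftrightarrow> D \<subseteq> closed_upper_halfplane l \<and> \<not> crosses l D"

definition closed_halfplane :: "point set \<Rightarrow> bool" where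
  "closed_halfplane H \<longleftrightarrow> (\<exists>u v w. (u, v) \<noteq> (0, 0) \<and> H = {p. u * fst p + v * snd p \<le> w})"

text \<open>A (possibly unbounded) closed triangle: intersection of at most three closed
  half-planes, with nonempty interior.\<close>
definition closed_triangle :: "point set \<Rightarrow> bool" where
  "closed_triangle D \<longleftrightarrow> (\<exists>H. finite H \<and> card H \<le> 3 \<and> (\<forall>h\<in>H. closed_halfplane h)
      \<and> D = \<Inter>H) \<and> interior D \<noteq> {}"

definition children :: "(nat \<Rightarrow> point set set) \<Rightarrow> nat \<Rightarrow> point set \<Rightarrow> point set set" where
  "children Xi i D = {D' \<in> Xi (Suc i). D' \<subseteq> D}"

definition cutting_hierarchy ::
  "real \<Rightarrow> real \<Rightarrow> real \<Rightarrow> nvline set \<Rightarrow> real \<Rightarrow> nat \<Rightarrow> (nat \<Rightarrow> point set set) \<Rightarrow> bool" where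
  "cutting_hierarchy rho c C P r k Xi \<longleftrightarrow>
     Xi 0 = {UNIV} \<and>
     (\<forall>i\<in>{1..k+1}.
        finite (Xi i) \<and> (\<forall>D\<in>Xi i. closed_triangle D) \<and>
        (\<forall>D\<in>Xi i. \<forall>D'\<in>Xi i. D \<noteq> D' \<longrightarrow> interior D \<inter> interior D' = {}) \<and>
        \<Union>(Xi i) = UNIV \<and>
        (\<forall>D\<in>Xi i. \<exists>!D'. D' \<in> Xi (i - 1) \<and> D \<subseteq> D') \<and>
        (\<forall>D'\<in>Xi (i - 1). D' = \<Union>(children Xi (i - 1) D'))) \<and>
     (\<forall>i\<in>{1..k}.
        real (card (Xi i)) \<le> C * rho ^ (2 * i) \<and>
        (\<forall>D\<in>Xi (i - 1). real (card (children Xi (i - 1) D)) \<le> c) \<and>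
        (\<forall>D\<in>Xi i. real (card {l\<in>P. crosses l D}) \<le> real (card P) / rho ^ i)) \<and>
     real (card (Xi (k + 1))) \<le> C * r ^ 2"

text \<open>Cells are tagged with their level to distinguish levels.\<close>
definition Psi :: "(nat \<Rightarrow> point set set) \<Rightarrow> nat \<Rightarrow> nvline \<Rightarrow> (nat \<times> point set) set" where
  "Psi Xi k l = {(i, D). i \<le> k \<and> D \<in> Xi i \<and> crosses l D}"

definition Psi_k1 :: "(nat \<Rightarrow> point set set) \<Rightarrow> nat \<Rightarrow> nvline \<Rightarrow> point set set" where
  "Psi_k1 Xi k l = {D \<in> Xi (k + 1). crosses l D}"

definition Psi_plus :: "(nat \<Rightarrow> point set set) \<Rightarrow> nat \<Rightarrow> nvline \<Rightarrow> (nat \<times> point set) set" where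
  "Psi_plus Xi k l = {(j, D'). \<exists>i D. (i, D) \<in> Psi Xi k l \<and> j = Suc i \<and>
        D' \<in> children Xi i D \<and> above l D'}"

end

theory Submission
  imports Defs
begin

lemma dc:
  fixes f :: "'b \<Rightarrow> real"
  assumes "finite P" "finite X"
  shows "(\<Sum>l\<in>P. \<Sum>D\<in>{D\<in>X. Q l D}. f D) = (\<Sum>D\<in>X. f D * real (card {l\<in>P. Q l D}))"
proof -
  have "(\<Sum>l\<in>P. \<Sum>D\<in>{D\<in>X. Q l D}. f D) = (\<Sum>l\<in>P. \<Sum>D\<in>X. if Q l D then f D else 0)"
    using assms by (simp add: sum.inter_filter)
  also have "\<dots> = (\<Sum>D\<in>X. \<Sum>l\<in>P. if Q l D then f D else 0)" by (rule sum.swap)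
  also have "\<dots> = (\<Sum>D\<in>X. f D * real (card {l\<in>P. Q l D}))"
    using assms by (simp add: sum.inter_filter[symmetric] mult.commute)
  finally show ?thesis .
qed

lemma geo:
  fixes rho :: real
  shows "(\<Sum>i<k. rho ^ i) * (rho - 1) = rho ^ k - 1"
proof (induction k)
  case 0 then show ?case by simp
next
  case (Suc k)
  have "(\<Sum>i<Suc k. rho ^ i) * (rho - 1) = (\<Sum>i<k. rho ^ i) * (rho - 1) + rho ^ k * (rho - 1)"
    by (simp add: distrib_right)
  also have "\<dots> = rho ^ Suc k - 1" using Suc by (simp add: algebra_simps)
  finally show ?case .
qed

lemma geo2:
  fixes rho r :: real
  assumes "rho \<ge> 2" "rho ^ k / rho < r"
  shows "(\<Sum>i<k. rho ^ i) \<le> 2 * r"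
proof -
  have rp: "rho > 0" using assms by simp
  have a: "rho ^ k < rho * r" using assms(2) rp by (simp add: divide_less_eq mult.commute)
  have "r > 0"
  proof -
    have "rho ^ k / rho \<ge> 0" using rp by simp
    then show ?thesis using assms(2) by linarith
  qed
  then have b: "rho * r \<le> 2 * r * (rho - 1)" using assms(1)
    by (simp add: algebra_simps)
  have "(\<Sum>i<k. rho ^ i) * (rho - 1) \<le> 2 * r * (rho - 1)" using geo[of rho k] a b by linarith
  then show ?thesis using assms(1) by simp
qed

theorem lemma5:
  fixes rho c C :: real
  assumes "rho \<ge> 2" and "c \<ge> 1" and "C \<ge> 1"
  shows "\<exists>K::real. \<forall>(P::nvline set) (r::real) (k::nat) (Xi::nat \<Rightarrow> point set set).
           finite P \<and> 1 \<le> r \<and> r \<le> real (card P) \<and>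
           rho ^ k / rho < r \<and> r \<le> rho ^ k \<and>
           cutting_hierarchy rho c C P r k Xi \<longrightarrow>
           real (\<Sum>l\<in>P. card (Psi_plus Xi k l) + card (Psi_k1 Xi k l))
             \<le> K * real (card P) * r"
proof (rule exI[of _ "2*c*C + 2*C"], intro allI impI)
  fix P :: "nvline set" and r :: real and k :: nat and Xi :: "nat \<Rightarrow> point set set"
  assume H: "finite P \<and> 1 \<le> r \<and> r \<le> real (card P) \<and> rho ^ k / rho < r \<and> r \<le> rho ^ k \<and>
           cutting_hierarchy rho c C P r k Xi"
  then have fP: "finite P" and r1: "1 \<le> r" and rk1: "rho ^ k / rho < r" and rk2: "r \<le> rho ^ k"
    and ch: "cutting_hierarchy rho c C P r k Xi" by auto
  define m where "m = real (card P)"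
  have m0: "m \<ge> 0" unfolding m_def by simp
  have rho0: "rho > 0" using assms by simp
  note ch' = ch[unfolded cutting_hierarchy_def]
  have X0: "Xi 0 = {UNIV}" using ch' by (rule conjunct1)
  have chA: "\<forall>i\<in>{1..k+1}.
        finite (Xi i) \<and> (\<forall>D\<in>Xi i. closed_triangle D) \<and>
        (\<forall>D\<in>Xi i. \<forall>D'\<in>Xi i. D \<noteq> D' \<longrightarrow> interior D \<inter> interior D' = {}) \<and>
        \<Union>(Xi i) = UNIV \<and>
        (\<forall>D\<in>Xi i. \<exists>!D'. D' \<in> Xi (i - 1) \<and> D \<subseteq> D') \<and>
        (\<forall>D'\<in>Xi (i - 1). D' = \<Union>(children Xi (i - 1) D'))"
    using ch' by (rule conjunct2[THEN conjunct1])
  have chB: "\<forall>i\<in>{1..k}.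
        real (card (Xi i)) \<le> C * rho ^ (2 * i) \<and>
        (\<forall>D\<in>Xi (i - 1). real (card (children Xi (i - 1) D)) \<le> c) \<and>
        (\<forall>D\<in>Xi i. real (card {l\<in>P. crosses l D}) \<le> real (card P) / rho ^ i)"
    using ch' by (rule conjunct2[THEN conjunct2, THEN conjunct1])
  have cardXk1: "real (card (Xi (k+1))) \<le> C * r^2"
    using ch' by (rule conjunct2[THEN conjunct2, THEN conjunct2])
  have finX: "finite (Xi i)" if "i \<le> k+1" for i
  proof (cases "i = 0")
    case True then show ?thesis using X0 by simp
  next
    case False then have "i \<in> {1..k+1}" using that by auto
    from bspec[OF chA this] show ?thesis by (rule conjunct1)
  qed
  have cardX: "real (card (Xi i)) \<le> C * rho ^ (2*i)" if "i \<le> k" for i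
  proof (cases "i = 0")
    case True then show ?thesis using X0 assms by simp
  next
    case False then have "i \<in> {1..k}" using that by auto
    from bspec[OF chB this] show ?thesis by (rule conjunct1)
  qed
  have chil: "real (card (children Xi i D)) \<le> c" if "i < k" "D \<in> Xi i" for i D
  proof -
    have "Suc i \<in> {1..k}" using that by auto
    from bspec[OF chB this] have "\<forall>D\<in>Xi (Suc i - 1). real (card (children Xi (Suc i - 1) D)) \<le> c" by (rule conjunct2[THEN conjunct1])
    then show ?thesis using that by simp
  qed
  have crs: "real (card {l\<in>P. crosses l D}) \<le> m / rho ^ i" if "i \<le> k" "D \<in> Xi i" for i D
  proof (cases "i = 0")
    case True then show ?thesis unfolding m_def using fP
      by (simp add: card_mono)
  next
    case False then have "i \<in> {1..k}" using that by auto
    from bspec[OF chB this] have "\<forall>D\<in>Xi i. real (card {l\<in>P. crosses l D}) \<le> real (card P) / rho ^ i" by (rule conjunct2[THEN conjunct2])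
    from bspec[OF this that(2)] show ?thesis unfolding m_def .
  qed
  have par: "\<exists>!D. D \<in> Xi k \<and> D' \<subseteq> D" if "D' \<in> Xi (k+1)" for D'
  proof -
    have "k+1 \<in> {1..k+1}" by auto
    from bspec[OF chA this] have "\<forall>D\<in>Xi (k+1). \<exists>!D'. D' \<in> Xi (k+1 - 1) \<and> D \<subseteq> D'" by (rule conjunct2[THEN conjunct2, THEN conjunct2, THEN conjunct2, THEN conjunct1])
    then show ?thesis using that by simp
  qed
  have r0: "r > 0" using r1 by simp

  define S where "S l = {D'\<in>Xi (k+1). \<exists>D\<in>Xi k. D' \<subseteq> D \<and> crosses l D}" for l
  have finS: "finite (S l)" for l unfolding S_def using finX[of "k+1"] by simp

  have perl: "real (card (Psi_plus Xi k l) + card (Psi_k1 Xi k l))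
      \<le> (\<Sum>i<k. \<Sum>D\<in>{D\<in>Xi i. crosses l D}. c) + 2 * real (card (S l))" for l
  proof -
    define U1 where "U1 = (\<Union>i<k. \<Union>D\<in>{D\<in>Xi i. crosses l D}. {Suc i} \<times> children Xi i D)"
    have finch: "finite (children Xi i D)" if "i < k" for i D
      using finX[of "Suc i"] that unfolding children_def by simp
    have finU1: "finite U1" unfolding U1_def
      using finX finch by (auto intro!: finite_UN_I)
    have sub: "Psi_plus Xi k l \<subseteq> U1 \<union> ({Suc k} \<times> S l)"
    proof
      fix x assume "x \<in> Psi_plus Xi k l"
      then obtain i D D' where x: "x = (Suc i, D')" and iD: "i \<le> k" "D \<in> Xi i" "crosses l D"
        and D': "D' \<in> children Xi i D"
        unfolding Psi_plus_def Psi_def by auto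
      show "x \<in> U1 \<union> ({Suc k} \<times> S l)"
      proof (cases "i < k")
        case True then show ?thesis unfolding U1_def using x iD D' by auto
      next
        case False then have "i = k" using iD by simp
        then show ?thesis using x iD D' unfolding S_def children_def by auto
      qed
    qed
    have "card (Psi_plus Xi k l) \<le> card (U1 \<union> ({Suc k} \<times> S l))"
      by (rule card_mono) (use finU1 finS sub in auto)
    also have "\<dots> \<le> card U1 + card ({Suc k} \<times> S l)" by (rule card_Un_le)
    also have "card ({Suc k} \<times> S l) = card (S l)" by (simp add: card_cartesian_product_singleton)
    finally have c1: "card (Psi_plus Xi k l) \<le> card U1 + card (S l)" .
    have "card U1 \<le> (\<Sum>i<k. card (\<Union>D\<in>{D\<in>Xi i. crosses l D}. {Suc i} \<times> children Xi i D))"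
      unfolding U1_def by (rule card_UN_le) simp
    also have "\<dots> \<le> (\<Sum>i<k. \<Sum>D\<in>{D\<in>Xi i. crosses l D}. card ({Suc i} \<times> children Xi i D))"
      by (rule sum_mono, rule card_UN_le) (use finX in simp)
    finally have "real (card U1) \<le> real (\<Sum>i<k. \<Sum>D\<in>{D\<in>Xi i. crosses l D}. card ({Suc i} \<times> children Xi i D))"
      by linarith
    also have "\<dots> = (\<Sum>i<k. \<Sum>D\<in>{D\<in>Xi i. crosses l D}. real (card (children Xi i D)))"
      by (simp add: card_cartesian_product_singleton)
    also have "\<dots> \<le> (\<Sum>i<k. \<Sum>D\<in>{D\<in>Xi i. crosses l D}. c)"
      by (intro sum_mono) (use chil in auto)
    finally have c2: "real (card U1) \<le> (\<Sum>i<k. \<Sum>D\<in>{D\<in>Xi i. crosses l D}. c)" .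
    have "Psi_k1 Xi k l \<subseteq> S l"
    proof
      fix D' assume "D' \<in> Psi_k1 Xi k l"
      then have D': "D' \<in> Xi (k+1)" "crosses l D'" unfolding Psi_k1_def by auto
      then obtain D where D: "D \<in> Xi k" "D' \<subseteq> D" using par by blast
      have "interior D' \<subseteq> interior D" using D(2) by (rule interior_mono)
      then have "crosses l D" using D'(2) unfolding crosses_def by blast
      then show "D' \<in> S l" unfolding S_def using D D' by auto
    qed
    then have c3: "card (Psi_k1 Xi k l) \<le> card (S l)" using finS by (simp add: card_mono)
    show ?thesis using c1 c2 c3 by simp
  qed

  have sum1: "(\<Sum>l\<in>P. \<Sum>i<k. \<Sum>D\<in>{D\<in>Xi i. crosses l D}. c) \<le> 2*c*C*m*r"
  proof -
    have "(\<Sum>l\<in>P. \<Sum>i<k. \<Sum>D\<in>{D\<in>Xi i. crosses l D}. c)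
        = (\<Sum>i<k. \<Sum>l\<in>P. \<Sum>D\<in>{D\<in>Xi i. crosses l D}. c)" by (rule sum.swap)
    also have "\<dots> = (\<Sum>i<k. \<Sum>D\<in>Xi i. c * real (card {l\<in>P. crosses l D}))"
      by (intro sum.cong refl dc) (use fP finX in auto)
    also have "\<dots> \<le> (\<Sum>i<k. \<Sum>D\<in>Xi i. c * (m / rho ^ i))"
      by (intro sum_mono mult_left_mono) (use crs assms in auto)
    also have "\<dots> = (\<Sum>i<k. real (card (Xi i)) * (c * (m / rho ^ i)))" by simp
    also have "\<dots> \<le> (\<Sum>i<k. C * rho ^ (2*i) * (c * (m / rho ^ i)))"
      by (intro sum_mono mult_right_mono) (use cardX assms m0 rho0 in auto)
    also have "\<dots> = (\<Sum>i<k. c * C * m * rho ^ i)"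
    proof (intro sum.cong refl)
      fix i
      have "rho ^ (2*i) = rho ^ i * rho ^ i" by (simp add: power_add[symmetric] mult_2)
      then show "C * rho ^ (2*i) * (c * (m / rho ^ i)) = c * C * m * rho ^ i" using rho0 by simp
    qed
    also have "\<dots> = c * C * m * (\<Sum>i<k. rho ^ i)" by (simp add: sum_distrib_left)
    also have "\<dots> \<le> c * C * m * (2 * r)"
      by (intro mult_left_mono geo2) (use assms rk1 m0 in auto)
    finally show ?thesis by simp
  qed

  have sum2: "(\<Sum>l\<in>P. real (card (S l))) \<le> C*m*r"
  proof -
    have "(\<Sum>l\<in>P. real (card (S l))) = (\<Sum>l\<in>P. \<Sum>D'\<in>{D'\<in>Xi (k+1). \<exists>D\<in>Xi k. D' \<subseteq> D \<and> crosses l D}. 1)"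
      unfolding S_def by simp
    also have "\<dots> = (\<Sum>D'\<in>Xi (k+1). 1 * real (card {l\<in>P. \<exists>D\<in>Xi k. D' \<subseteq> D \<and> crosses l D}))"
      by (rule dc) (use fP finX in auto)
    also have "\<dots> \<le> (\<Sum>D'\<in>Xi (k+1). m / r)"
    proof (rule sum_mono)
      fix D' assume D': "D' \<in> Xi (k+1)"
      then obtain D0 where D0: "D0 \<in> Xi k" "D' \<subseteq> D0" and u: "\<And>D. D \<in> Xi k \<Longrightarrow> D' \<subseteq> D \<Longrightarrow> D = D0"
        using par by metis
      have "{l\<in>P. \<exists>D\<in>Xi k. D' \<subseteq> D \<and> crosses l D} \<subseteq> {l\<in>P. crosses l D0}" using u by blast
      then have "card {l\<in>P. \<exists>D\<in>Xi k. D' \<subseteq> D \<and> crosses l D} \<le> card {l\<in>P. crosses l D0}"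
        using fP by (simp add: card_mono)
      also have "real (card {l\<in>P. crosses l D0}) \<le> m / rho ^ k" using crs D0 by simp
      also have "\<dots> \<le> m / r" using rk2 r0 m0 by (simp add: divide_left_mono)
      finally show "1 * real (card {l\<in>P. \<exists>D\<in>Xi k. D' \<subseteq> D \<and> crosses l D}) \<le> m / r" by simp
    qed
    also have "\<dots> = real (card (Xi (k+1))) * (m / r)" by simp
    also have "\<dots> \<le> C * r^2 * (m / r)"
      by (rule mult_right_mono) (use cardXk1 m0 r0 in auto)
    also have "\<dots> = C * m * r" using r0 by (simp add: power2_eq_square)
    finally show ?thesis .
  qed

  have "real (\<Sum>l\<in>P. card (Psi_plus Xi k l) + card (Psi_k1 Xi k l))
      = (\<Sum>l\<in>P. real (card (Psi_plus Xi k l) + card (Psi_k1 Xi k l)))" by simp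
  also have "\<dots> \<le> (\<Sum>l\<in>P. (\<Sum>i<k. \<Sum>D\<in>{D\<in>Xi i. crosses l D}. c) + 2 * real (card (S l)))"
    by (rule sum_mono) (rule perl)
  also have "\<dots> = (\<Sum>l\<in>P. \<Sum>i<k. \<Sum>D\<in>{D\<in>Xi i. crosses l D}. c) + 2 * (\<Sum>l\<in>P. real (card (S l)))"
    by (simp add: sum.distrib sum_distrib_left)
  also have "\<dots> \<le> 2*c*C*m*r + 2 * (C*m*r)" using sum1 sum2 by linarith
  also have "\<dots> = (2*c*C + 2*C) * real (card P) * r" unfolding m_def by (simp add: algebra_simps)
  finally show "real (\<Sum>l\<in>P. card (Psi_plus Xi k l) + card (Psi_k1 Xi k l))
             \<le> (2*c*C + 2*C) * real (card P) * r" .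
qed

end
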